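(* Let $A$ be the filtered boundary matrix of a Morse decomposition with respect to an admissible enumeration $\sigma_1,\dots,\sigma_n$, and let $B$ be any matrix obtained from $A$ by a finite sequence of operations, each adding some column $s$ to some column $j$ with $s<j$ (for instance any intermediate matrix of ConMat or of a complete column reduction). Let $j$ be a homogeneous column of $B$ and let $s<j$ be a nonzero column of $B$ with $B[\mathrm{low}_B(s),j]=1$. If adding column $s$ to column $j$ changes the pivot of column $j$, then column $s$ is homogeneous, $\sigma_s$ and $\sigma_j$ lie in the same Morse set, and $\mathrm{low}_B(s)=\mathrm{low}_B(j)$.
   Context: $K$ is a finite simplicial complex ($\tau\le\sigma$: $\tau$ is a face of $\sigma$; $\mathrm{cl}(\sigma)=\{\tau:\tau\le\sigma\}$). A multivector field $\mathcal V$ on $K$ is a partition of $K$ into convex sets $V$ (if $\sigma,\tau\in V$ and $\sigma\le\mu\le\tau$ then $\mu\in V$); $[\sigma]_{\mathcal V}$ is the part containing $\sigma$, $F_{\mathcal V}(\sigma)=[\sigma]_{\mathcal V}\cup\mathrm{cl}(\sigma)$, and a path is a sequence $\sigma_1,\dots,\sigma_r$ with $\sigma_k\in F_{\mathcal V}(\sigma_{k-1})$. A Morse decomposition indexed by a finite poset $(P,\le_P)$ is a partition $K=\bigsqcup_{p\in P}M_p$ such that every path from $M_p$ to $M_q$ has $q\le_P p$; $[\sigma]_P$ is the $p$ with $\sigma\in M_p$. An admissible enumeration is $\sigma_1,\dots,\sigma_n$ of all simplices of $K$ such that (a) for some linear extension $\le_{lin}$ of $\le_P$, $i\le j\Rightarrow[\sigma_i]_P\le_{lin}[\sigma_j]_P$;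 (b) if $\sigma_i$ is a proper face of $\sigma_j$ then $i<j$. The filtered boundary matrix $A$ is the $n\times n$ $\mathbb Z_2$-matrix with $A[i,j]=1$ iff $\sigma_i$ is a codimension-one face of $\sigma_j$; row/column $i$ represents $\sigma_i$. Adding column $s$ to column $j$ means replacing column $j$ by the mod-2 sum. For a nonzero column $j$ of a matrix $B$, its pivot $\mathrm{low}_B(j)$ is the largest $i$ with $B[i,j]=1$ (a zero column has no pivot). Column $j$ is homogeneous if nonzero and $\sigma_j$, $\sigma_{\mathrm{low}_B(j)}$ are in the same Morse set. ConMat reduction phase: for $j=1,\dots,n$, for $i=\mathrm{low}(j)$ down to $1$: if the current entry $(i,j)$ is $1$ and some homogeneous column $s<j$ has pivot $i$, add column $s$ to column $j$. A complete column reduction of a matrix is a finite sequence of additions of a column $s$ to a column $j$ with $s<j$ (no homogeneity restriction) ending in a matrix whose nonzero columns have pairwise distinct pivots. *)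

theory Defs
  imports Main
begin

definition simplicial_complex :: "'v set set \<Rightarrow> bool" where
  "simplicial_complex K \<longleftrightarrow> finite K \<and>
     (\<forall>\<sigma>\<in>K. finite \<sigma> \<and> \<sigma> \<noteq> {} \<and> (\<forall>\<tau>. \<tau> \<subseteq> \<sigma> \<and> \<tau> \<noteq> {} \<longrightarrow> \<tau> \<in> K))"

definition cl :: "'v set set \<Rightarrow> 'v set \<Rightarrow> 'v set set" where
  "cl K \<sigma> = {\<tau>\<in>K. \<tau> \<subseteq> \<sigma>}"

definition convex_in :: "'v set set \<Rightarrow> 'v set set \<Rightarrow> bool" where
  "convex_in K V \<longleftrightarrow> V \<subseteq> K \<and>
     (\<forall>\<sigma>\<in>V. \<forall>\<tau>\<in>V. \<forall>\<mu>\<in>K. \<sigma> \<subseteq> \<mu> \<and> \<mu> \<subseteq> \<tau> \<longrightarrow> \<mu> \<in> V)"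

definition multivector_field :: "'v set set \<Rightarrow> 'v set set set \<Rightarrow> bool" where
  "multivector_field K \<V> \<longleftrightarrow>
     (\<forall>V\<in>\<V>. V \<noteq> {} \<and> convex_in K V) \<and> \<Union>\<V> = K \<and>
     (\<forall>V\<in>\<V>. \<forall>W\<in>\<V>. V \<noteq> W \<longrightarrow> V \<inter> W = {})"

definition mvf_class :: "'v set set set \<Rightarrow> 'v set \<Rightarrow> 'v set set" where
  "mvf_class \<V> \<sigma> = (THE V. V \<in> \<V> \<and> \<sigma> \<in> V)"

definition mvf_F :: "'v set set \<Rightarrow> 'v set set set \<Rightarrow> 'v set \<Rightarrow> 'v set set" where
  "mvf_F K \<V> \<sigma> = mvf_class \<V> \<sigma> \<union> cl K \<sigma>"

definition is_path :: "'v set set \<Rightarrow> 'v set set set \<Rightarrow> 'v set list \<Rightarrow> bool" where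
  "is_path K \<V> xs \<longleftrightarrow> xs \<noteq> [] \<and> set xs \<subseteq> K \<and>
     (\<forall>k. Suc k < length xs \<longrightarrow> xs ! Suc k \<in> mvf_F K \<V> (xs ! k))"

(* Morse decomposition indexed by the finite poset (P, leP); (q,p) \<in> leP means q \<le>_P p *)
definition morse_decomposition ::
  "'v set set \<Rightarrow> 'v set set set \<Rightarrow> 'p set \<Rightarrow> ('p \<times> 'p) set \<Rightarrow> ('p \<Rightarrow> 'v set set) \<Rightarrow> bool" where
  "morse_decomposition K \<V> P leP M \<longleftrightarrow>
     finite P \<and> leP \<subseteq> P \<times> P \<and> partial_order_on P leP \<and>
     (\<forall>p\<in>P. M p \<noteq> {}) \<and> (\<Union>p\<in>P. M p) = K \<and>
     (\<forall>p\<in>P. \<forall>q\<in>P. p \<noteq> q \<longrightarrow> M p \<inter> M q = {}) \<and>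
     (\<forall>p\<in>P. \<forall>q\<in>P. \<forall>xs. is_path K \<V> xs \<and> hd xs \<in> M p \<and> last xs \<in> M q \<longrightarrow> (q, p) \<in> leP)"

definition morse_index :: "'p set \<Rightarrow> ('p \<Rightarrow> 'v set set) \<Rightarrow> 'v set \<Rightarrow> 'p" where
  "morse_index P M \<sigma> = (THE p. p \<in> P \<and> \<sigma> \<in> M p)"

definition admissible_enumeration ::
  "'v set set \<Rightarrow> 'p set \<Rightarrow> ('p \<times> 'p) set \<Rightarrow> ('p \<Rightarrow> 'v set set) \<Rightarrow> nat \<Rightarrow> (nat \<Rightarrow> 'v set) \<Rightarrow> bool" where
  "admissible_enumeration K P leP M n \<sigma> \<longleftrightarrow>
     bij_betw \<sigma> {1..n} K \<and>
     (\<exists>lin. linear_order_on P lin \<and> lin \<subseteq> P \<times> P \<and> leP \<subseteq> lin \<and>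
        (\<forall>i\<in>{1..n}. \<forall>j\<in>{1..n}. i \<le> j \<longrightarrow>
            (morse_index P M (\<sigma> i), morse_index P M (\<sigma> j)) \<in> lin)) \<and>
     (\<forall>i\<in>{1..n}. \<forall>j\<in>{1..n}. \<sigma> i \<subset> \<sigma> j \<longrightarrow> i < j)"

(* Z_2 matrices as boolean functions; rows/columns indexed by 1..n *)
definition boundary_matrix :: "(nat \<Rightarrow> 'v set) \<Rightarrow> nat \<Rightarrow> nat \<Rightarrow> nat \<Rightarrow> bool" where
  "boundary_matrix \<sigma> n = (\<lambda>i j. i \<in> {1..n} \<and> j \<in> {1..n} \<and>
      \<sigma> i \<subseteq> \<sigma> j \<and> card (\<sigma> i) + 1 = card (\<sigma> j))"

definition add_col :: "(nat \<Rightarrow> nat \<Rightarrow> bool) \<Rightarrow> nat \<Rightarrow> nat \<Rightarrow> nat \<Rightarrow> nat \<Rightarrow> bool" where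
  "add_col B s j = (\<lambda>i k. if k = j then (B i j \<noteq> B i s) else B i k)"

inductive reachable_by_col_adds :: "nat \<Rightarrow> (nat \<Rightarrow> nat \<Rightarrow> bool) \<Rightarrow> (nat \<Rightarrow> nat \<Rightarrow> bool) \<Rightarrow> bool"
  for n A where
  refl: "reachable_by_col_adds n A A"
| step: "reachable_by_col_adds n A B \<Longrightarrow> s \<in> {1..n} \<Longrightarrow> j \<in> {1..n} \<Longrightarrow> s < j \<Longrightarrow>
         reachable_by_col_adds n A (add_col B s j)"

definition col_nonzero :: "nat \<Rightarrow> (nat \<Rightarrow> nat \<Rightarrow> bool) \<Rightarrow> nat \<Rightarrow> bool" where
  "col_nonzero n B j \<longleftrightarrow> (\<exists>i\<in>{1..n}. B i j)"

definition low :: "nat \<Rightarrow> (nat \<Rightarrow> nat \<Rightarrow> bool) \<Rightarrow> nat \<Rightarrow> nat" where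
  "low n B j = Max {i\<in>{1..n}. B i j}"

definition pivot :: "nat \<Rightarrow> (nat \<Rightarrow> nat \<Rightarrow> bool) \<Rightarrow> nat \<Rightarrow> nat option" where
  "pivot n B j = (if col_nonzero n B j then Some (low n B j) else None)"

definition same_morse_set :: "'p set \<Rightarrow> ('p \<Rightarrow> 'v set set) \<Rightarrow> 'v set \<Rightarrow> 'v set \<Rightarrow> bool" where
  "same_morse_set P M \<sigma> \<tau> \<longleftrightarrow> (\<exists>p\<in>P. \<sigma> \<in> M p \<and> \<tau> \<in> M p)"

definition homogeneous ::
  "'p set \<Rightarrow> ('p \<Rightarrow> 'v set set) \<Rightarrow> (nat \<Rightarrow> 'v set) \<Rightarrow> nat \<Rightarrow> (nat \<Rightarrow> nat \<Rightarrow> bool) \<Rightarrow> nat \<Rightarrow> bool" where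
  "homogeneous P M \<sigma> n B j \<longleftrightarrow>
     col_nonzero n B j \<and> same_morse_set P M (\<sigma> j) (\<sigma> (low n B j))"

end

theory Submission
  imports Defs
begin

lemma inv_reach:
  assumes "reachable_by_col_adds n A B" "A = boundary_matrix \<sigma> n"
    "\<forall>i\<in>{1..n}. \<forall>j\<in>{1..n}. \<sigma> i \<subset> \<sigma> j \<longrightarrow> i < j"
  shows "B i k \<Longrightarrow> i \<in> {1..n} \<and> k \<in> {1..n} \<and> i < k"
  using assms(1)
proof (induction arbitrary: i k)
  case refl
  then have h: "i \<in> {1..n}" "k \<in> {1..n}" "\<sigma> i \<subseteq> \<sigma> k" "card (\<sigma> i) + 1 = card (\<sigma> k)"
    using assms(2) by (auto simp: boundary_matrix_def)
  then have "\<sigma> i \<subset> \<sigma> k" by auto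
  then show ?case using assms(3) h by blast
next
  case (step B s j)
  then show ?case by (auto simp: add_col_def split: if_splits) (meson less_trans)
qed

lemma low_props:
  assumes "col_nonzero n B k"
  shows "low n B k \<in> {1..n} \<and> B (low n B k) k \<and> (\<forall>i\<in>{1..n}. B i k \<longrightarrow> i \<le> low n B k)"
proof -
  have f: "finite {i\<in>{1..n}. B i k}" by simp
  have ne: "{i\<in>{1..n}. B i k} \<noteq> {}" using assms by (auto simp: col_nonzero_def)
  have "low n B k \<in> {i\<in>{1..n}. B i k}" unfolding low_def using Max_in[OF f ne] .
  moreover have "\<forall>i\<in>{1..n}. B i k \<longrightarrow> i \<le> low n B k" unfolding low_def using f by auto
  ultimately show ?thesis by auto
qed

lemma low_eq:
  assumes "l \<in> {1..n}" "B l k" "\<forall>i\<in>{1..n}. B i k \<longrightarrow> i \<le> l"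
  shows "pivot n B k = Some l"
proof -
  have cn: "col_nonzero n B k" using assms by (auto simp: col_nonzero_def)
  from low_props[OF cn] assms have "low n B k = l" by (meson antisym)
  with cn show ?thesis by (simp add: pivot_def)
qed

lemma midx:
  assumes "morse_decomposition K \<V> P leP M" "p \<in> P" "x \<in> M p"
  shows "morse_index P M x = p"
  unfolding morse_index_def
proof (rule the_equality)
  show "p \<in> P \<and> x \<in> M p" using assms by auto
next
  fix q assume "q \<in> P \<and> x \<in> M q"
  then show "q = p" using assms unfolding morse_decomposition_def by blast
qed

theorem proposition2:
  fixes K :: "'v set set" and \<V> :: "'v set set set"
    and P :: "'p set" and leP :: "('p \<times> 'p) set" and M :: "'p \<Rightarrow> 'v set set"
    and n :: nat and \<sigma> :: "nat \<Rightarrow> 'v set"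
    and A B :: "nat \<Rightarrow> nat \<Rightarrow> bool" and s j :: nat
  assumes "simplicial_complex K"
    and "multivector_field K \<V>"
    and "morse_decomposition K \<V> P leP M"
    and "admissible_enumeration K P leP M n \<sigma>"
    and "A = boundary_matrix \<sigma> n"
    and "reachable_by_col_adds n A B"
    and "j \<in> {1..n}" and "s \<in> {1..n}" and "s < j"
    and "homogeneous P M \<sigma> n B j"
    and "col_nonzero n B s"
    and "B (low n B s) j"
    and "pivot n (add_col B s j) j \<noteq> pivot n B j"
  shows "homogeneous P M \<sigma> n B s \<and> same_morse_set P M (\<sigma> s) (\<sigma> j) \<and> low n B s = low n B j"
proof -
  have cj: "col_nonzero n B j" using assms(10) by (simp add: homogeneous_def)
  note Ls = low_props[OF assms(11)] and Lj = low_props[OF cj]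
  have le: "low n B s \<le> low n B j" using Ls Lj assms(12) by blast
  have eq: "low n B s = low n B j"
  proof (rule ccontr)
    assume "low n B s \<noteq> low n B j"
    with le have lt: "low n B s < low n B j" by simp
    have "pivot n (add_col B s j) j = Some (low n B j)"
    proof (rule low_eq)
      show "low n B j \<in> {1..n}" using Lj by blast
      show "add_col B s j (low n B j) j" using Lj Ls lt by (auto simp: add_col_def)
      show "\<forall>i\<in>{1..n}. add_col B s j i j \<longrightarrow> i \<le> low n B j"
        using Lj Ls lt by (auto simp: add_col_def)
    qed
    moreover have "pivot n B j = Some (low n B j)" using cj by (simp add: pivot_def)
    ultimately show False using assms(13) by simp
  qed
  from assms(4) obtain lin where lin: "linear_order_on P lin" "lin \<subseteq> P \<times> P"
    and adm: "\<forall>i\<in>{1..n}. \<forall>j\<in>{1..n}. i \<le> j \<longrightarrow>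
            (morse_index P M (\<sigma> i), morse_index P M (\<sigma> j)) \<in> lin"
    and face: "\<forall>i\<in>{1..n}. \<forall>j\<in>{1..n}. \<sigma> i \<subset> \<sigma> j \<longrightarrow> i < j"
    unfolding admissible_enumeration_def by blast
  define l where "l = low n B j"
  have Bls: "B l s" using Ls eq l_def by simp
  have lsn: "l < s" "l \<in> {1..n}" using inv_reach[OF assms(6) assms(5) face Bls] by auto
  from assms(10) obtain p where p: "p \<in> P" "\<sigma> j \<in> M p" "\<sigma> l \<in> M p"
    unfolding homogeneous_def same_morse_set_def l_def by blast
  have mj: "morse_index P M (\<sigma> j) = p" using midx[OF assms(3) p(1,2)] .
  have ml: "morse_index P M (\<sigma> l) = p" using midx[OF assms(3) p(1,3)] .
  have a1: "(p, morse_index P M (\<sigma> s)) \<in> lin" using adm lsn assms(8) ml by force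
  have a2: "(morse_index P M (\<sigma> s), p) \<in> lin" using adm assms(7,8,9) mj by force
  have "antisym lin" using lin(1) unfolding linear_order_on_def partial_order_on_def by blast
  then have ms: "morse_index P M (\<sigma> s) = p" using a1 a2 unfolding antisym_def by blast
  have "\<sigma> s \<in> K" using assms(4,8) unfolding admissible_enumeration_def bij_betw_def by blast
  then obtain q where q: "q \<in> P" "\<sigma> s \<in> M q" using assms(3) unfolding morse_decomposition_def by blast
  have "q = p" using midx[OF assms(3) q] ms by simp
  with q have sp: "\<sigma> s \<in> M p" by simp
  show ?thesis
    using sp p assms(11) eq unfolding homogeneous_def same_morse_set_def l_def by metis
qed

end
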